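(* Let $T=2^m$, $d\ge1$ and $u_{1:T}\in(\mathbb{R}^d)^T$. With the Haar coefficients and detail sequences defined in the context, for every scale-location pair $(j,l)$, $$\|\hat u^{(j,l)}\|_2=2^{-1/2}\sqrt{P^{(j,l)}\bar S^{(j,l)}},$$ and for every scale $j$, $$\sum_l\|\hat u^{(j,l)}\|_2\le 2^{-1/2}\sqrt{P^{(j)}\bar S^{(j)}}.$$
   Context: Haar features for $T=2^m$: for scale $j\in[1:m]$ and location $l\in[1:2^{-j}T]$, $h^{(j,l)}\in\mathbb{R}^T$ has $t$-th entry $1$ for $t\in[2^j(l-1)+1:2^j(l-1)+2^{j-1}]$, $-1$ for $t\in[2^j(l-1)+2^{j-1}+1:2^jl]$, and $0$ otherwise; normalized $\tilde h^{(j,l)}=2^{-j/2}h^{(j,l)}$. For $i\in[1:d]$, $u^{(i)}_{1:T}\in\mathbb{R}^T$ is the sequence of $i$-th coordinates of $u_1,\ldots,u_T$. Coefficient $\hat u^{(j,l)}\in\mathbb{R}^d$ has $i$-th entry $\langle\tilde h^{(j,l)},u^{(i)}_{1:T}\rangle$. Detail sequences $z^{(j,l)}\in(\mathbb{R}^d)^T$: $z^{(j,l)}_t=\hat u^{(j,l)}\tilde h^{(j,l)}_t$; $z^{(j)}=\sum_l z^{(j,l)}$. Statistics: $\bar S^{(j,l)}=\sum_{t=1}^T\|z^{(j,l)}_t\|_2$, $\bar S^{(j)}=\sum_{t=1}^T\|z^{(j)}_t\|_2$, $P^{(j,l)}=\sum_{t=2^j(l-1)+1}^{2^jl-1}\|z^{(j,l)}_{t+1}-z^{(j,l)}_t\|_2$,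 $P^{(j)}=\sum_l P^{(j,l)}$. *)

theory Defs
  imports "HOL-Analysis.Analysis"
begin

text \<open>Time horizon T = 2^m; time indices t range over {1..T}; a sequence
u_1,...,u_T in R^d is a function u :: nat => real^'d (values outside {1..T} irrelevant).\<close>

definition haar :: "nat \<Rightarrow> nat \<Rightarrow> nat \<Rightarrow> real" where
  "haar j l t =
     (if 2^j * (l - 1) + 1 \<le> t \<and> t \<le> 2^j * (l - 1) + 2^(j - 1) then 1
      else if 2^j * (l - 1) + 2^(j - 1) + 1 \<le> t \<and> t \<le> 2^j * l then -1
      else 0)"

definition haar_n :: "nat \<Rightarrow> nat \<Rightarrow> nat \<Rightarrow> real" where
  "haar_n j l t = 2 powr (- real j / 2) * haar j l t"

definition haar_coef :: "nat \<Rightarrow> (nat \<Rightarrow> real^'d) \<Rightarrow> nat \<Rightarrow> nat \<Rightarrow> real^'d" where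
  "haar_coef m u j l = (\<chi> i. \<Sum>t = 1..2^m. haar_n j l t * (u t $ i))"

definition detail :: "nat \<Rightarrow> (nat \<Rightarrow> real^'d) \<Rightarrow> nat \<Rightarrow> nat \<Rightarrow> nat \<Rightarrow> real^'d" where
  "detail m u j l t = haar_n j l t *\<^sub>R haar_coef m u j l"

definition detail_scale :: "nat \<Rightarrow> (nat \<Rightarrow> real^'d) \<Rightarrow> nat \<Rightarrow> nat \<Rightarrow> real^'d" where
  "detail_scale m u j t = (\<Sum>l = 1..2^m div 2^j. detail m u j l t)"

definition Sbar :: "nat \<Rightarrow> (nat \<Rightarrow> real^'d) \<Rightarrow> nat \<Rightarrow> nat \<Rightarrow> real" where
  "Sbar m u j l = (\<Sum>t = 1..2^m. norm (detail m u j l t))"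

definition Sbar_scale :: "nat \<Rightarrow> (nat \<Rightarrow> real^'d) \<Rightarrow> nat \<Rightarrow> real" where
  "Sbar_scale m u j = (\<Sum>t = 1..2^m. norm (detail_scale m u j t))"

definition Pvar :: "nat \<Rightarrow> (nat \<Rightarrow> real^'d) \<Rightarrow> nat \<Rightarrow> nat \<Rightarrow> real" where
  "Pvar m u j l = (\<Sum>t = 2^j * (l - 1) + 1 .. 2^j * l - 1.
                      norm (detail m u j l (t + 1) - detail m u j l t))"

definition Pvar_scale :: "nat \<Rightarrow> (nat \<Rightarrow> real^'d) \<Rightarrow> nat \<Rightarrow> real" where
  "Pvar_scale m u j = (\<Sum>l = 1..2^m div 2^j. Pvar m u j l)"

end

theory Submission
  imports Defs
begin

lemma haar_alt:
  assumes "j \<ge> 1" "l \<ge> 1"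
  shows "haar j l t = (if 2^j*(l-1) + 1 \<le> t \<and> t \<le> 2^j*(l-1) + 2^(j-1) then 1
      else if 2^j*(l-1) + 2^(j-1) + 1 \<le> t \<and> t \<le> 2^j*(l-1) + 2*2^(j-1) then -1 else 0)"
proof -
  have H: "(2::nat)^j = 2*2^(j-1)" using assms
    by (metis One_nat_def Suc_pred power_Suc zero_less_one less_le_trans)
  have e: "(2::nat)^j*l = 2^j*(l-1) + 2*2^(j-1)" using assms H
    by (metis add.commute le_add_diff_inverse mult.right_neutral distrib_left)
  show ?thesis unfolding haar_def e by simp
qed

lemma H2: "(j::nat) \<ge> 1 \<Longrightarrow> (2::nat)^j = 2*2^(j-1)"
  by (metis One_nat_def Suc_pred power_Suc zero_less_one less_le_trans)

lemma haar_abs: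
  assumes "j \<ge> 1" "l \<ge> 1"
  shows "\<bar>haar j l t\<bar> = (if 2^j*(l-1) < t \<and> t \<le> 2^j*(l-1) + 2^j then 1 else 0)"
proof -
  have g: "\<And>a H::nat. \<bar>(if a + 1 \<le> t \<and> t \<le> a + H then 1
      else if a + H + 1 \<le> t \<and> t \<le> a + 2*H then -1 else 0)::real\<bar>
     = (if a < t \<and> t \<le> a + 2*H then 1 else 0)" by auto
  show ?thesis unfolding haar_alt[OF assms] H2[OF assms(1)] g ..
qed

lemma haar_jump:
  assumes "j \<ge> 1" "l \<ge> 1" "2^j*(l-1) + 1 \<le> t" "t \<le> 2^j*(l-1) + 2^j - 1"
  shows "\<bar>haar j l (t+1) - haar j l t\<bar> = (if t = 2^j*(l-1) + 2^(j-1) then 2 else 0)"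
proof -
  have g: "\<And>a H::nat. H \<ge> 1 \<Longrightarrow> a + 1 \<le> t \<Longrightarrow> t \<le> a + 2*H - 1 \<Longrightarrow>
      \<bar>(if a + 1 \<le> t+1 \<and> t+1 \<le> a + H then 1
      else if a + H + 1 \<le> t+1 \<and> t+1 \<le> a + 2*H then -1 else 0) - 
      (if a + 1 \<le> t \<and> t \<le> a + H then 1
      else if a + H + 1 \<le> t \<and> t \<le> a + 2*H then -1 else 0)::real\<bar>
     = (if t = a + H then 2 else 0)" by auto
  have "2^(j-1) \<ge> (1::nat)" by simp
  then show ?thesis using assms(3,4) unfolding haar_alt[OF assms(1,2)] H2[OF assms(1)]
    by (intro g)
qed


lemma haar_nz:
  assumes "j \<ge> 1" "l \<ge> 1" "haar j l t \<noteq> 0"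
  shows "2^j*(l-1) < t \<and> t \<le> 2^j*l"
proof -
  have "\<bar>haar j l t\<bar> \<noteq> 0" using assms by simp
  hence "2^j*(l-1) < t \<and> t \<le> 2^j*(l-1) + 2^j" unfolding haar_abs[OF assms(1,2)] by (simp split: if_splits)
  moreover have "(2::nat)^j*(l-1) + 2^j = 2^j*l" using assms(2)
    by (metis add.commute le_add_diff_inverse mult.right_neutral distrib_left)
  ultimately show ?thesis by simp
qed

lemma haar_unique:
  assumes "j \<ge> 1" "l \<ge> 1" "l' \<ge> 1" "haar j l t \<noteq> 0" "haar j l' t \<noteq> 0"
  shows "l = l'"
proof (rule ccontr)
  assume ne: "l \<noteq> l'"
  have A: "2^j*(l-1) < t \<and> t \<le> 2^j*l" by (rule haar_nz[OF assms(1,2,4)])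
  have B: "2^j*(l'-1) < t \<and> t \<le> 2^j*l'" by (rule haar_nz[OF assms(1,3,5)])
  show False
  proof (cases "l < l'")
    case True
    hence "(2::nat)^j*l \<le> 2^j*(l'-1)" by (intro mult_le_mono2) simp
    thus False using A B by linarith
  next
    case False
    hence "l' < l" using ne by simp
    hence "(2::nat)^j*l' \<le> 2^j*(l-1)" by (intro mult_le_mono2) simp
    thus False using A B by linarith
  qed
qed

lemma norm_detail:
  "norm (detail m u j l t) = 2 powr (- real j / 2) * \<bar>haar j l t\<bar> * norm (haar_coef m u j l)"
  unfolding detail_def haar_n_def by (simp add: abs_mult)

lemma Sbar_eq:
  assumes "j \<ge> 1" "l \<ge> 1" "2^j*l \<le> (2::nat)^m"
  shows "Sbar m u j l = 2 powr (- real j / 2) * 2^j * norm (haar_coef m u j l)"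
proof -
  let ?a = "2^j*(l-1) :: nat"
  have e: "(2::nat)^j*(l-1) + 2^j = 2^j*l" using assms(2)
    by (metis add.commute le_add_diff_inverse mult.right_neutral distrib_left)
  have "(\<Sum>t = 1..2^m. \<bar>haar j l t\<bar>) = (\<Sum>t \<in> {1..(2::nat)^m}. if ?a < t \<and> t \<le> ?a + 2^j then 1 else (0::real))"
    unfolding haar_abs[OF assms(1,2)] ..
  also have "\<dots> = (\<Sum>t \<in> {t \<in> {1..(2::nat)^m}. ?a < t \<and> t \<le> ?a + 2^j}. 1)"
    by (rule sum.inter_filter[symmetric]) simp
  also have "{t \<in> {1..(2::nat)^m}. ?a < t \<and> t \<le> ?a + 2^j} = {?a+1..?a+2^j}"
    using assms(3) e by auto
  finally have s: "(\<Sum>t = 1..2^m. \<bar>haar j l t\<bar>) = 2^j" by simp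
  have "Sbar m u j l = 2 powr (- real j / 2) * (\<Sum>t = 1..2^m. \<bar>haar j l t\<bar>) * norm (haar_coef m u j l)"
    unfolding Sbar_def norm_detail by (simp add: sum_distrib_left sum_distrib_right)
  then show ?thesis unfolding s .
qed

lemma Pvar_eq:
  assumes "j \<ge> 1" "l \<ge> 1"
  shows "Pvar m u j l = 2 powr (- real j / 2) * 2 * norm (haar_coef m u j l)"
proof -
  let ?a = "2^j*(l-1) :: nat"
  have e: "(2::nat)^j*(l-1) + 2^j = 2^j*l" using assms(2)
    by (metis add.commute le_add_diff_inverse mult.right_neutral distrib_left)
  have "(\<Sum>t = ?a+1..2^j*l-1. \<bar>haar j l (t+1) - haar j l t\<bar>)
      = (\<Sum>t = ?a+1..2^j*l-1. if t = ?a + 2^(j-1) then 2 else 0)"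
    by (rule sum.cong[OF refl], rule haar_jump[OF assms]) (use e in auto)
  also have "\<dots> = 2"
  proof -
    have o: "(1::nat) \<le> 2^(j-1)" by simp
    have "?a + 2^(j-1) \<in> {?a+1..2^j*l-1}" using e H2[OF assms(1)] o
      by (simp only: atLeastAtMost_iff) arith
    then show ?thesis by (simp add: sum.delta)
  qed
  finally have s: "(\<Sum>t = ?a+1..2^j*l-1. \<bar>haar j l (t+1) - haar j l t\<bar>) = 2" .
  have d: "norm (detail m u j l (t + 1) - detail m u j l t) =
     2 powr (- real j / 2) * norm (haar_coef m u j l) * \<bar>haar j l (t+1) - haar j l t\<bar>" for t
    unfolding detail_def haar_n_def
    by (simp add: scaleR_diff_left[symmetric] right_diff_distrib[symmetric] abs_mult)
  have "Pvar m u j l = 2 powr (- real j / 2) * norm (haar_coef m u j l) * (\<Sum>t = ?a+1..2^j*l-1. \<bar>haar j l (t+1) - haar j l t\<bar>)"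
    unfolding Pvar_def d by (simp add: sum_distrib_left)
  then show ?thesis unfolding s by simp
qed


lemma norm_detail_scale:
  assumes "j \<ge> 1"
  shows "norm (detail_scale m u j t) = (\<Sum>l = 1..2^m div 2^j. norm (detail m u j l t))"
proof (cases "\<exists>l0\<in>{1..2^m div 2^j}. haar j l0 t \<noteq> 0")
  case True
  then obtain l0 where l0: "l0 \<in> {1..2^m div 2^j}" "haar j l0 t \<noteq> 0" by blast
  have z: "detail m u j l t = 0" if "l \<in> {1..2^m div 2^j} - {l0}" for l
  proof -
    have "haar j l t = 0" using haar_unique[OF assms, of l l0 t] that l0 by auto
    thus ?thesis unfolding detail_def haar_n_def by simp
  qed
  have "detail_scale m u j t = detail m u j l0 t"
    unfolding detail_scale_def using l0(1) z
    by (subst sum.remove[of _ l0]) (auto intro: sum.neutral)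
  moreover have "(\<Sum>l = 1..2^m div 2^j. norm (detail m u j l t)) = norm (detail m u j l0 t)"
    using l0(1) z
    by (subst sum.remove[of _ l0]) (auto intro: sum.neutral)
  ultimately show ?thesis by simp
next
  case False
  hence z: "detail m u j l t = 0" if "l \<in> {1..2^m div 2^j}" for l
    using that unfolding detail_def haar_n_def by auto
  show ?thesis unfolding detail_scale_def using z by simp
qed

lemma Kfact: "2 powr (- real j / 2) * 2 powr (- real j / 2) * 2^j = (1::real)"
proof -
  have "2 powr (- real j / 2) * 2 powr (- real j / 2) = (2::real) powr (- real j)"
    by (simp add: powr_add[symmetric])
  also have "\<dots> = 1 / 2^j" by (simp add: powr_minus powr_realpow divide_inverse)
  finally show ?thesis by simp
qed

lemma final_eq:
  assumes "n \<ge> 0"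
  shows "2 powr (-1/2) * sqrt ((2 powr (- real j / 2) * 2 * n) * (2 powr (- real j / 2) * 2^j * n)) = (n::real)"
proof -
  have "(2 powr (- real j / 2) * 2 * n) * (2 powr (- real j / 2) * 2^j * n) = 2 * n^2"
    using Kfact[of j] by (simp add: power2_eq_square algebra_simps)
  hence "sqrt ((2 powr (- real j / 2) * 2 * n) * (2 powr (- real j / 2) * 2^j * n)) = sqrt (2 * n^2)"
    by (simp only:)
  also have "\<dots> = sqrt 2 * n" using assms by (simp add: real_sqrt_mult)
  finally have "sqrt ((2 powr (- real j / 2) * 2 * n) * (2 powr (- real j / 2) * 2^j * n)) = sqrt 2 * n" .
  moreover have "2 powr (-1/2) * sqrt 2 = (1::real)"
    by (simp add: powr_half_sqrt[symmetric] powr_add[symmetric])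
  ultimately show ?thesis by (metis mult.assoc mult_1)
qed

theorem lemma6:
  fixes m :: nat and u :: "nat \<Rightarrow> real^'d"
  shows "(\<forall>j \<in> {1..m}. \<forall>l \<in> {1..2^m div 2^j}.
            norm (haar_coef m u j l) = 2 powr (-1/2) * sqrt (Pvar m u j l * Sbar m u j l))
       \<and> (\<forall>j \<in> {1..m}.
            (\<Sum>l = 1..2^m div 2^j. norm (haar_coef m u j l))
              \<le> 2 powr (-1/2) * sqrt (Pvar_scale m u j * Sbar_scale m u j))"
proof -
  have bnd: "2^j*l \<le> (2::nat)^m" if "l \<in> {1..2^m div 2^j}" for j l
  proof -
    have "(2::nat)^j*l \<le> 2^j*(2^m div 2^j)" using that by (intro mult_le_mono2) simp
    also have "\<dots> \<le> 2^m" by simp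
    finally show ?thesis .
  qed
  have P1: "\<forall>j \<in> {1..m}. \<forall>l \<in> {1..2^m div 2^j}.
            norm (haar_coef m u j l) = 2 powr (-1/2) * sqrt (Pvar m u j l * Sbar m u j l)"
  proof (intro ballI)
    fix j l :: nat assume j: "j \<in> {1..m}" and l: "l \<in> {1..2^m div 2^j}"
    hence j1: "j \<ge> 1" and l1: "l \<ge> 1" by auto
    show "norm (haar_coef m u j l) = 2 powr (-1/2) * sqrt (Pvar m u j l * Sbar m u j l)"
      unfolding Pvar_eq[OF j1 l1] Sbar_eq[OF j1 l1 bnd[OF l]]
      by (rule final_eq[symmetric]) simp
  qed
  have P2: "\<forall>j \<in> {1..m}.
            (\<Sum>l = 1..2^m div 2^j. norm (haar_coef m u j l))
              \<le> 2 powr (-1/2) * sqrt (Pvar_scale m u j * Sbar_scale m u j)"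
  proof (intro ballI)
    fix j assume j: "j \<in> {1..m}"
    hence j1: "j \<ge> 1" by auto
    let ?N = "\<Sum>l = 1..2^m div 2^j. norm (haar_coef m u j l)"
    have "Pvar_scale m u j = 2 powr (- real j / 2) * 2 * ?N"
      unfolding Pvar_scale_def
      by (subst sum.cong[OF refl Pvar_eq[OF j1]]) (auto simp: sum_distrib_left)
    moreover have "Sbar_scale m u j = (\<Sum>l = 1..2^m div 2^j. Sbar m u j l)"
      unfolding Sbar_scale_def Sbar_def norm_detail_scale[OF j1] by (rule sum.swap)
    hence "Sbar_scale m u j = 2 powr (- real j / 2) * 2^j * ?N"
      by (subst (asm) sum.cong[OF refl Sbar_eq[OF j1]]) (auto simp: sum_distrib_left bnd)
    ultimately have "2 powr (-1/2) * sqrt (Pvar_scale m u j * Sbar_scale m u j) = ?N"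
      by (simp only:) (rule final_eq, simp add: sum_nonneg)
    thus "?N \<le> 2 powr (-1/2) * sqrt (Pvar_scale m u j * Sbar_scale m u j)" by simp
  qed
  show ?thesis using P1 P2 by blast
qed

end
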